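(* Let f1 and f2 be two point agents in the plane, each moving with a constant nonzero velocity, such that their straight-line trajectories are not parallel and hence intersect in a single point $P$. Let $t_1$ and $t_2$ be the times at which f1 and f2 respectively pass through $P$, and suppose $t_1>t_2$ (f1 reaches the intersection after f2). Then f1 perceives generalized regressive motion (GRM) from f2 at all times $t<t_2$.
   Context: Each agent is a point (center of projection) with a heading equal to the direction of its velocity. For observer f1 and observed f2, let $\phi_{21}(t)\in[-\pi,\pi)$ be the azimuthal position of f2 as seen from f1, measured relative to f1's heading: $\phi=0$ is straight ahead, positive angles are to the observer's left (counterclockwise) and negative to its right; $\dot\phi_{21}$ is its time derivative. Fix the Contralateral Visual Angle $\mathrm{CVA}\in[0,\pi]$ (the angular distance of the nasal boundary of each eye's visual field from the straight-ahead direction). f1 perceives GRM from f2 at time $t$ if and only if either $\dot\phi_{21}(t)>0$ and $\phi_{21}(t)\in[-\pi,\mathrm{CVA}]$, or $\dot\phi_{21}(t)<0$ and $\phi_{21}(t)\in[-\mathrm{CVA},\pi]$. *)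

theory Defs
  imports "HOL-Analysis.Analysis"
begin

text \<open>The plane is modelled as the complex numbers. An agent moving with constant
velocity v starting (at time 0) at x has position x + t v at time t; its heading is v.\<close>

definition pos :: "complex \<Rightarrow> complex \<Rightarrow> real \<Rightarrow> complex" where
  "pos x v t = x + of_real t * v"

text \<open>Angle of z in the interval [-pi, pi) (Arg has range (-pi, pi]).\<close>
definition ang :: "complex \<Rightarrow> real" where
  "ang z = (if Arg z = pi then - pi else Arg z)"

text \<open>phi_21(t): azimuthal position of f2 as seen from f1, relative to f1's heading v1,
counterclockwise (left) positive, in [-pi, pi).\<close>
definition phi21 :: "complex \<Rightarrow> complex \<Rightarrow> complex \<Rightarrow> complex \<Rightarrow> real \<Rightarrow> real" where
  "phi21 x1 v1 x2 v2 t = ang ((pos x2 v2 t - pos x1 v1 t) / v1)"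

text \<open>d is the time derivative of phi_21 at t, i.e. the derivative of (any continuous
lift of) the angle: the unit vector cis(phi) has derivative i d cis(phi t).  This agrees
with the ordinary derivative of phi_21 away from the branch cut phi = -pi.\<close>
definition phi21_rate :: "complex \<Rightarrow> complex \<Rightarrow> complex \<Rightarrow> complex \<Rightarrow> real \<Rightarrow> real \<Rightarrow> bool" where
  "phi21_rate x1 v1 x2 v2 t d \<longleftrightarrow>
     ((\<lambda>s. cis (phi21 x1 v1 x2 v2 s)) has_vector_derivative
        (\<i> * of_real d * cis (phi21 x1 v1 x2 v2 t))) (at t)"

definition GRM_cond :: "real \<Rightarrow> real \<Rightarrow> real \<Rightarrow> bool" where
  "GRM_cond CVA phi dphi \<longleftrightarrow>
     (dphi > 0 \<and> phi \<in> {-pi..CVA}) \<or> (dphi < 0 \<and> phi \<in> {-CVA..pi})"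

text \<open>f1 perceives GRM from f2 at time t: the agents are at distinct positions (so the
bearing is defined), phi_21 is differentiable at t and the GRM condition holds.\<close>
definition perceives_GRM :: "real \<Rightarrow> complex \<Rightarrow> complex \<Rightarrow> complex \<Rightarrow> complex \<Rightarrow> real \<Rightarrow> bool" where
  "perceives_GRM CVA x1 v1 x2 v2 t \<longleftrightarrow>
     pos x1 v1 t \<noteq> pos x2 v2 t \<and>
     (\<exists>d. phi21_rate x1 v1 x2 v2 t d \<and> GRM_cond CVA (phi21 x1 v1 x2 v2 t) d)"

end

theory Submission
  imports Defs
begin

lemma cis_ang: "z \<noteq> 0 \<Longrightarrow> cis (ang z) = z / complex_of_real (cmod z)"
proof -
  assume z: "z \<noteq> 0"
  have "cis (ang z) = cis (Arg z)"
    unfolding ang_def by (auto simp: complex_eq_iff)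
  also have "\<dots> = z / complex_of_real (cmod z)" using cis_Arg[OF z]
    by (simp add: sgn_div_norm divide_inverse mult.commute scaleR_conv_of_real)
  finally show ?thesis .
qed

lemma ang_bounds: "-pi \<le> ang z \<and> ang z \<le> pi"
  unfolding ang_def using Arg_bounded[of z] by auto

lemma ang_neg: assumes "Im z < 0" shows "ang z < 0"
proof -
  have z: "z \<noteq> 0" using assms by auto
  have "sin (Arg z) < 0" using sin_Arg[OF z] assms z by (simp add: divide_neg_pos)
  moreover have "Arg z \<ge> 0 \<Longrightarrow> sin (Arg z) \<ge> 0" using Arg_bounded[of z] by (intro sin_ge_zero) auto
  ultimately have "Arg z < 0" by linarith
  thus ?thesis unfolding ang_def by auto
qed

lemma ang_pos: assumes "Im z > 0" shows "ang z > 0"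
proof -
  have z: "z \<noteq> 0" using assms by auto
  have s: "sin (Arg z) > 0" using sin_Arg[OF z] assms z by simp
  have "Arg z \<le> 0 \<Longrightarrow> sin (Arg z) \<le> 0"
  proof -
    assume "Arg z \<le> 0"
    hence "sin (- Arg z) \<ge> 0" using Arg_bounded[of z] by (intro sin_ge_zero) auto
    thus ?thesis by simp
  qed
  hence "Arg z > 0" using s by linarith
  moreover have "Arg z \<noteq> pi" using s by auto
  ultimately show ?thesis unfolding ang_def by auto
qed

lemma deriv_sgn:
  fixes c0 c1 :: complex
  assumes nz: "c0 + of_real t * c1 \<noteq> 0"
  shows "((\<lambda>s. (c0 + of_real s * c1) / of_real (cmod (c0 + of_real s * c1))) has_vector_derivative
     (\<i> * of_real (Im (cnj (c0 + of_real t * c1) * c1) / (cmod (c0 + of_real t * c1))^2)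
        * ((c0 + of_real t * c1) / of_real (cmod (c0 + of_real t * c1))))) (at t)"
proof -
  define w where "w = c0 + of_real t * c1"
  have wn: "((\<lambda>s. c0 + of_real s * c1) has_derivative (\<lambda>h. of_real h * c1)) (at t)"
    by (auto intro!: derivative_eq_intros)
  have nd: "((\<lambda>s. cmod (c0 + of_real s * c1)) has_derivative (\<lambda>h. (of_real h * c1) \<bullet> sgn w)) (at t)"
    using has_derivative_compose[OF wn has_derivative_norm[OF nz]] unfolding w_def by (simp add: o_def)
  have w0: "w \<noteq> 0" using nz w_def by simp
  define N where "N = cmod w"
  have N0: "N > 0" using w0 N_def by simp
  have N2: "N^2 = (Re w)^2 + (Im w)^2" unfolding N_def cmod_def by simp
  have key: "- w * (inverse (complex_of_real N) * complex_of_real ((complex_of_real h * c1) \<bullet> sgn w) *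
           inverse (complex_of_real N)) + complex_of_real h * c1 / complex_of_real N
      = h *\<^sub>R (\<i> * complex_of_real (Im (cnj w * c1) / N\<^sup>2) * (w / complex_of_real N))" for h
  proof -
    have sg: "sgn w = w / of_real N" by (simp add: sgn_div_norm N_def scaleR_conv_of_real divide_inverse mult.commute)
    have ip: "(complex_of_real h * c1) \<bullet> sgn w = h * (Re c1 * Re w + Im c1 * Im w) / N"
      unfolding sg by (simp add: inner_complex_def field_simps add_divide_distrib)
    have R: "Re w * Re w = N*N - Im w * Im w" using N2 by (simp add: power2_eq_square)
    show ?thesis unfolding ip using N0
      by (simp add: complex_eq_iff field_simps power2_eq_square R) (simp add: algebra_simps)?
  qed
  have w0': "c0 + complex_of_real t * c1 \<noteq> 0" using nz .
  show ?thesis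
    unfolding has_vector_derivative_def w_def[symmetric]
    apply (rule has_derivative_eq_rhs)
     apply (rule derivative_eq_intros wn nd refl | simp only: w0' of_real_eq_0_iff norm_eq_zero not_False_eq_True)+
    apply (rule ext)
    unfolding w_def[symmetric] N_def[symmetric] add_0_left
    apply (rule key)
    done
qed

theorem theorem5:
  fixes x1 v1 x2 v2 P :: complex and t1 t2 CVA :: real
  assumes "v1 \<noteq> 0" and "v2 \<noteq> 0"
    and "Im (cnj v1 * v2) \<noteq> 0"
    and "pos x1 v1 t1 = P" and "pos x2 v2 t2 = P"
    and "t1 > t2"
    and "0 \<le> CVA" and "CVA \<le> pi"
  shows "\<forall>t < t2. perceives_GRM CVA x1 v1 x2 v2 t"
proof (intro allI impI)
  fix t assume tt: "t < t2"
  define u where "u = v2 / v1"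
  define c0 where "c0 = (x2 - x1) / v1"
  define c1 where "c1 = u - 1"
  have x1: "x1 = P - of_real t1 * v1" and x2: "x2 = P - of_real t2 * v2"
    using assms(4,5) unfolding pos_def by (auto simp: algebra_simps)
  have wdef: "(pos x2 v2 s - pos x1 v1 s) / v1 = c0 + of_real s * c1" for s
    unfolding pos_def c0_def c1_def u_def using assms(1) by (simp add: field_simps)
  have wform: "c0 + of_real s * c1 = of_real (t1 - s) - of_real (t2 - s) * u" for s
    unfolding c0_def c1_def x1 x2 u_def using assms(1) by (simp add: field_simps)
  have Imw: "Im (c0 + of_real s * c1) = - (t2 - s) * Im u" for s
    unfolding wform by (simp add: algebra_simps)
  have Imu: "Im u = Im (cnj v1 * v2) / (cmod v1)^2"
    unfolding u_def Im_divide' by (simp add: algebra_simps)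
  have Imu0: "Im u \<noteq> 0" using Imu assms(1,3) by simp
  have phi: "phi21 x1 v1 x2 v2 s = ang (c0 + of_real s * c1)" for s
    unfolding phi21_def wdef ..
  have nz: "c0 + of_real s * c1 \<noteq> 0" if "s < t2" for s
  proof
    assume "c0 + of_real s * c1 = 0"
    hence "Im (c0 + of_real s * c1) = 0" by simp
    thus False using Imw[of s] Imu0 that by simp
  qed
  define w where "w = c0 + of_real t * c1"
  define d where "d = Im (cnj w * c1) / (cmod w)^2"
  have Id: "Im (cnj w * c1) = (t1 - t2) * Im u"
    unfolding w_def wform unfolding c1_def by (simp add: algebra_simps)
  have w0: "w \<noteq> 0" using nz[OF tt] w_def by simp
  have rate: "phi21_rate x1 v1 x2 v2 t d"
    unfolding phi21_rate_def
  proof (rule has_vector_derivative_transform_within_open[where S="{..<t2}"])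
    show "((\<lambda>s. (c0 + of_real s * c1) / of_real (cmod (c0 + of_real s * c1))) has_vector_derivative
         \<i> * complex_of_real d * cis (phi21 x1 v1 x2 v2 t)) (at t)"
      using deriv_sgn[OF nz[OF tt]] unfolding phi cis_ang[OF nz[OF tt]] d_def w_def .
    show "open {..<t2}" by simp
    show "t \<in> {..<t2}" using tt by simp
    show "(c0 + of_real s * c1) / of_real (cmod (c0 + of_real s * c1)) = cis (phi21 x1 v1 x2 v2 s)"
      if "s \<in> {..<t2}" for s using that cis_ang[OF nz[of s]] unfolding phi by simp
  qed
  have GRM: "GRM_cond CVA (phi21 x1 v1 x2 v2 t) d"
  proof (cases "Im u > 0")
    case True
    have "d > 0" unfolding d_def Id using True assms(6) w0 by simp
    moreover have "Im w < 0" unfolding w_def Imw using True tt by (simp add: mult_neg_pos)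
    ultimately show ?thesis unfolding GRM_cond_def phi w_def[symmetric]
      using ang_neg[of w] ang_bounds[of w] assms(7) by auto
  next
    case False
    hence F: "Im u < 0" using Imu0 by simp
    have "d < 0" unfolding d_def Id using F assms(6) w0 by (simp add: mult_pos_neg divide_neg_pos)
    moreover have "Im w > 0" unfolding w_def Imw using F tt by (simp add: mult_neg_neg)
    ultimately show ?thesis unfolding GRM_cond_def phi w_def[symmetric]
      using ang_pos[of w] ang_bounds[of w] assms(7) by auto
  qed
  have "pos x1 v1 t \<noteq> pos x2 v2 t"
  proof
    assume "pos x1 v1 t = pos x2 v2 t"
    hence "(pos x2 v2 t - pos x1 v1 t) / v1 = 0" by simp
    thus False using nz[OF tt] wdef by simp
  qed
  thus "perceives_GRM CVA x1 v1 x2 v2 t" unfolding perceives_GRM_def using rate GRM by blast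
qed

end
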